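(* Let $(V,\Omega)$ be a finite-dimensional real symplectic vector space and let $A:V\to V$ be a linear map with $\Omega(Ax,y)+\Omega(x,Ay)=0$ for all $x,y\in V$ and $A^2=+I$. Let $V_+=\ker(A-I)$, $V_-=\ker(A+I)$, so $V=V_+\oplus V_-$, and let $P_\pm:V\to V_\pm$, $z\mapsto z_\pm$, be the corresponding projections. Let $\theta^A$ be the one-form on $V$ given by $\theta^A_z(v_z)=\frac{1}{2}\Omega(z-Az,v)$, and let ${\rm Aut}(V,\theta^A)$ be the group of all diffeomorphisms $g:V\to V$ satisfying $g^*\theta^A=\theta^A$. Then the rule \[ g(z)=f(z_+)+\Bigl[\{f'_{z_+}\circ P_+\}^{\dagger}\Bigr]^{-1}(z_-) \qquad (z\in V)\] defines a group isomorphism ${\rm Diff}(V_+)\to{\rm Aut}(V,\theta^A)$, $f\mapsto g$, where ${\rm Diff}(V_+)$ is the group of all diffeomorphisms of $V_+$.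
   Context: $V$ is a finite-dimensional real vector space and $\Omega$ a nonsingular alternating bilinear form on $V$; $V_+$ and $V_-$ are then Lagrangian subspaces. For $z,v\in V$, $v_z\in T_zV$ denotes the tangent vector at $z$ corresponding to $v$ under the canonical identification $T_zV\cong V$. For a smooth map $g:V\to V$, $(g^*\theta^A)_z(v_z)=\frac12\Omega(g(z)-Ag(z),g'_z v)$, where $g'_z$ is the derivative of $g$ at $z$. For a linear map $B:V\to V$, its symplectic adjoint $B^\dagger$ is defined by $\Omega(B^\dagger x,y)=\Omega(x,By)$ for all $x,y\in V$. In the formula, $f'_{z_+}:V_+\to V_+$ is the derivative of $f$ at $z_+$, and $f'_{z_+}\circ P_+$ is regarded as a linear map $V\to V$ (with range in $V_+$); its symplectic adjoint restricts to a linear isomorphism of $V_-$ onto itself, and $[\,\cdot\,]^{-1}$ denotes the inverse of this restriction, applied to $z_-\in V_-$. *)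

theory Defs
  imports "HOL-Analysis.Analysis" "HOL-Library.FuncSet"
begin

fun ddiff :: "('a::real_normed_vector \<Rightarrow> 'b::real_normed_vector) \<Rightarrow> 'a list \<Rightarrow> 'a \<Rightarrow> 'b" where
  "ddiff f [] = f"
| "ddiff f (v # vs) = (\<lambda>x. frechet_derivative (ddiff f vs) (at x) v)"

definition smooth :: "('a::real_normed_vector \<Rightarrow> 'b::real_normed_vector) \<Rightarrow> bool" where
  "smooth f \<longleftrightarrow> (\<forall>vs. ddiff f vs differentiable_on UNIV)"

definition diffeo :: "('a::real_normed_vector \<Rightarrow> 'a) \<Rightarrow> bool" where
  "diffeo g \<longleftrightarrow> smooth g \<and> (\<exists>h. smooth h \<and> h \<circ> g = id \<and> g \<circ> h = id)"

definition symplectic_form :: "('a::real_vector \<Rightarrow> 'a \<Rightarrow> real) \<Rightarrow> bool" where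
  "symplectic_form \<Omega> \<longleftrightarrow> bilinear \<Omega> \<and> (\<forall>x. \<Omega> x x = 0)
      \<and> (\<forall>x. (\<forall>y. \<Omega> x y = 0) \<longrightarrow> x = 0)"

definition Vplus :: "('a::real_vector \<Rightarrow> 'a) \<Rightarrow> 'a set" where
  "Vplus A = {x. A x - x = 0}"

definition Vminus :: "('a::real_vector \<Rightarrow> 'a) \<Rightarrow> 'a set" where
  "Vminus A = {x. A x + x = 0}"

definition Pplus :: "('a::real_vector \<Rightarrow> 'a) \<Rightarrow> 'a \<Rightarrow> 'a" where
  "Pplus A z = (THE p. p \<in> Vplus A \<and> z - p \<in> Vminus A)"

definition Pminus :: "('a::real_vector \<Rightarrow> 'a) \<Rightarrow> 'a \<Rightarrow> 'a" where
  "Pminus A z = (THE m. m \<in> Vminus A \<and> z - m \<in> Vplus A)"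

definition sadj :: "('a::real_vector \<Rightarrow> 'a \<Rightarrow> real) \<Rightarrow> ('a \<Rightarrow> 'a) \<Rightarrow> 'a \<Rightarrow> 'a" where
  "sadj \<Omega> B = (THE C. linear C \<and> (\<forall>x y. \<Omega> (C x) y = \<Omega> x (B y)))"

text \<open>Diff(V+): maps f : V+ -> V+ represented extensionally on V+ (value undefined outside).
  Smoothness of a map on the subspace V+ is expressed as smoothness of f o P+ on V.\<close>
definition Diff_plus :: "('a::real_normed_vector \<Rightarrow> 'a) \<Rightarrow> ('a \<Rightarrow> 'a) set" where
  "Diff_plus A = {f. f \<in> Vplus A \<rightarrow> Vplus A \<and> f \<in> extensional (Vplus A)
      \<and> smooth (f \<circ> Pplus A)
      \<and> (\<exists>h. h \<in> Vplus A \<rightarrow> Vplus A \<and> smooth (h \<circ> Pplus A)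
             \<and> (\<forall>x\<in>Vplus A. h (f x) = x \<and> f (h x) = x))}"

definition pullback_theta :: "('a::real_normed_vector \<Rightarrow> 'a \<Rightarrow> real) \<Rightarrow> ('a \<Rightarrow> 'a) \<Rightarrow> ('a \<Rightarrow> 'a) \<Rightarrow> 'a \<Rightarrow> 'a \<Rightarrow> real" where
  "pullback_theta \<Omega> A g z v = (1/2) * \<Omega> (g z - A (g z)) (frechet_derivative g (at z) v)"

definition theta :: "('a::real_normed_vector \<Rightarrow> 'a \<Rightarrow> real) \<Rightarrow> ('a \<Rightarrow> 'a) \<Rightarrow> 'a \<Rightarrow> 'a \<Rightarrow> real" where
  "theta \<Omega> A z v = (1/2) * \<Omega> (z - A z) v"

definition Aut :: "('a::real_normed_vector \<Rightarrow> 'a \<Rightarrow> real) \<Rightarrow> ('a \<Rightarrow> 'a) \<Rightarrow> ('a \<Rightarrow> 'a) set" where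
  "Aut \<Omega> A = {g. diffeo g \<and> pullback_theta \<Omega> A g = theta \<Omega> A}"

text \<open>The lift f |-> g, g(z) = f(z+) + [(f'_{z+} o P+)^dagger |_{V-}]^{-1}(z-).
  The derivative of f o P+ at z+ is f'_{z+} o P+.\<close>
definition lift :: "('a::real_normed_vector \<Rightarrow> 'a \<Rightarrow> real) \<Rightarrow> ('a \<Rightarrow> 'a) \<Rightarrow> ('a \<Rightarrow> 'a) \<Rightarrow> 'a \<Rightarrow> 'a" where
  "lift \<Omega> A f z = f (Pplus A z)
     + (THE w. w \<in> Vminus A
          \<and> sadj \<Omega> (frechet_derivative (f \<circ> Pplus A) (at (Pplus A z))) w = Pminus A z)"

end

theory Submission
  imports Defs
begin



definition dir :: "('a::real_normed_vector \<Rightarrow> 'b::real_normed_vector) \<Rightarrow> 'a \<Rightarrow> 'a \<Rightarrow> 'b" where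
  "dir f v = (\<lambda>x. frechet_derivative f (at x) v)"

lemma ddiff_snoc: "ddiff f (vs @ [v]) = ddiff (dir f v) vs"
  by (induction vs) (auto simp: dir_def)

lemma smooth_coinduct:
  fixes f :: "'a::real_normed_vector \<Rightarrow> 'b::real_normed_vector"
  assumes "S f" "\<And>f. S f \<Longrightarrow> f differentiable_on UNIV"
    "\<And>f v. S f \<Longrightarrow> S (dir f v)"
  shows "smooth f"
proof -
  have "\<forall>f::'a\<Rightarrow>'b. S f \<longrightarrow> S (ddiff f vs)" for vs
    by (induction vs rule: rev_induct) (auto simp: ddiff_snoc assms(3))
  then show ?thesis using assms unfolding smooth_def by blast
qed

lemma smooth_dir: "smooth f \<Longrightarrow> smooth (dir f v)"
  unfolding smooth_def by (metis ddiff_snoc)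

lemma smooth_differentiable: "smooth f \<Longrightarrow> f differentiable_on UNIV"
  unfolding smooth_def by (metis ddiff.simps(1))

lemma smooth_differentiable_at: "smooth f \<Longrightarrow> f differentiable (at x)"
  using smooth_differentiable by (metis UNIV_I differentiable_on_def)

lemma smooth_hasd: "smooth f \<Longrightarrow> (f has_derivative frechet_derivative f (at x)) (at x)"
  using smooth_differentiable_at frechet_derivative_works by blast

lemma smooth_cont: "smooth f \<Longrightarrow> continuous_on UNIV f"
  using smooth_differentiable differentiable_imp_continuous_on by blast

lemma dir_eq: "(\<And>x. (f has_derivative f' x) (at x)) \<Longrightarrow> dir f v = (\<lambda>x. f' x v)"
  unfolding dir_def by (metis frechet_derivative_at)

lemma smooth_const: "smooth (\<lambda>x::'a::real_normed_vector. c::'b::real_normed_vector)"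
proof (rule smooth_coinduct[where S="\<lambda>f. \<exists>c. f = (\<lambda>x. c)"])
  fix f :: "'a \<Rightarrow> 'b" and v assume "\<exists>c. f = (\<lambda>x. c)"
  then obtain c where c: "f = (\<lambda>x. c)" by blast
  have "dir f v = (\<lambda>x. 0)" using dir_eq[of f "\<lambda>x h. 0"] c by auto
  then show "\<exists>c. dir f v = (\<lambda>x. c)" by blast
qed auto

lemma smooth_linear: "linear (L::'a::euclidean_space \<Rightarrow> 'b::real_normed_vector) \<Longrightarrow> smooth L"
proof (rule smooth_coinduct[where S="\<lambda>f. linear f \<or> (\<exists>c. f = (\<lambda>x. c))"])
  fix f :: "'a \<Rightarrow> 'b" and v assume "linear f \<or> (\<exists>c. f = (\<lambda>x. c))"
  then show "linear (dir f v) \<or> (\<exists>c. dir f v = (\<lambda>x. c))"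
  proof
    assume "linear f"
    then have "bounded_linear f" by (simp add: linear_conv_bounded_linear)
    then have "dir f v = (\<lambda>x. f v)" using dir_eq[of f "\<lambda>x. f"] bounded_linear_imp_has_derivative by blast
    then show ?thesis by blast
  next
    assume "\<exists>c. f = (\<lambda>x. c)"
    then obtain c where c: "f = (\<lambda>x. c)" by blast
    have "dir f v = (\<lambda>x. 0)" using dir_eq[of f "\<lambda>x h. 0"] c by auto
    then show ?thesis by blast
  qed
next
  fix f :: "'a \<Rightarrow> 'b" assume "linear f \<or> (\<exists>c. f = (\<lambda>x. c))"
  then show "f differentiable_on UNIV"
    by (metis differentiable_const differentiable_on_def linear_conv_bounded_linear bounded_linear_imp_differentiable)
qed auto

lemma has_derivative_sum_list:
  "(\<And>p. p \<in> set ps \<Longrightarrow> (F p has_derivative F' p) (at x)) \<Longrightarrow>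
   ((\<lambda>x. \<Sum>p\<leftarrow>ps. F p x) has_derivative (\<lambda>h. \<Sum>p\<leftarrow>ps. F' p h)) (at x)"
  by (induction ps) (auto intro!: derivative_eq_intros)

lemma smooth_bilinear:
  assumes bb: "bounded_bilinear \<beta>" and a: "smooth a" and b: "smooth b"
  shows "smooth (\<lambda>x. \<beta> (a x) (b x))"
proof (rule smooth_coinduct[where S="\<lambda>f. \<exists>ps. (\<forall>p\<in>set ps. smooth (fst p) \<and> smooth (snd p))
     \<and> f = (\<lambda>x. \<Sum>p\<leftarrow>ps. \<beta> (fst p x) (snd p x))"])
  show "\<exists>ps. (\<forall>p\<in>set ps. smooth (fst p) \<and> smooth (snd p)) \<and> (\<lambda>x. \<beta> (a x) (b x)) = (\<lambda>x. \<Sum>p\<leftarrow>ps. \<beta> (fst p x) (snd p x))"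
    by (rule exI[of _ "[(a,b)]"]) (simp add: a b)
next
  fix f assume "\<exists>ps. (\<forall>p\<in>set ps. smooth (fst p) \<and> smooth (snd p)) \<and> f = (\<lambda>x. \<Sum>p\<leftarrow>ps. \<beta> (fst p x) (snd p x))"
  then obtain ps where ps: "\<forall>p\<in>set ps. smooth (fst p) \<and> smooth (snd p)" and f: "f = (\<lambda>x. \<Sum>p\<leftarrow>ps. \<beta> (fst p x) (snd p x))" by blast
  have hd: "(f has_derivative (\<lambda>h. \<Sum>p\<leftarrow>ps. \<beta> (frechet_derivative (fst p) (at x) h) (snd p x) + \<beta> (fst p x) (frechet_derivative (snd p) (at x) h))) (at x)" for x
    unfolding f
    apply (rule has_derivative_sum_list[where F="\<lambda>p x. \<beta> (fst p x) (snd p x)"])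
    apply (rule bounded_bilinear.FDERIV[OF bb, THEN has_derivative_eq_rhs])
    using ps smooth_hasd by (auto simp: algebra_simps)
  then show "f differentiable_on UNIV" unfolding differentiable_on_def differentiable_def by blast
  fix v
  have "dir f v = (\<lambda>x. \<Sum>p\<leftarrow>ps. \<beta> (frechet_derivative (fst p) (at x) v) (snd p x) + \<beta> (fst p x) (frechet_derivative (snd p) (at x) v))"
    using dir_eq[OF hd] .
  also have "\<dots> = (\<lambda>x. \<Sum>p\<leftarrow>concat (map (\<lambda>p. [(dir (fst p) v, snd p), (fst p, dir (snd p) v)]) ps). \<beta> (fst p x) (snd p x))"
    by (rule ext, induction ps) (auto simp: dir_def)
  finally show "\<exists>ps. (\<forall>p\<in>set ps. smooth (fst p) \<and> smooth (snd p)) \<and> dir f v = (\<lambda>x. \<Sum>p\<leftarrow>ps. \<beta> (fst p x) (snd p x))"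
    using ps by (intro exI[of _ "concat (map (\<lambda>p. [(dir (fst p) v, snd p), (fst p, dir (snd p) v)]) ps)"]) (auto intro: smooth_dir)
qed

lemma smooth_mult: "smooth (f::'a::real_normed_vector\<Rightarrow>real) \<Longrightarrow> smooth g \<Longrightarrow> smooth (\<lambda>x. f x * g x)"
  using smooth_bilinear[OF bounded_bilinear_mult] .

lemma smooth_scaleR: "smooth (f::'a::real_normed_vector\<Rightarrow>real) \<Longrightarrow> smooth (g::'a\<Rightarrow>'b::real_normed_vector) \<Longrightarrow> smooth (\<lambda>x. f x *\<^sub>R g x)"
  using smooth_bilinear[OF bounded_bilinear_scaleR] .

lemma smooth_inner: "smooth (f::'a::real_normed_vector\<Rightarrow>'b::real_inner) \<Longrightarrow> smooth (\<lambda>x. f x \<bullet> c)"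
  using smooth_bilinear[OF bounded_bilinear_inner, of f "\<lambda>x. c"] smooth_const by blast

lemma linear_basis_expand:
  fixes L :: "'b::euclidean_space \<Rightarrow> 'c::real_vector"
  assumes "linear L" "set bs = Basis" "distinct bs"
  shows "L w = (\<Sum>i\<leftarrow>bs. (w \<bullet> i) *\<^sub>R L i)"
proof -
  have "L w = L (\<Sum>i\<in>Basis. (w \<bullet> i) *\<^sub>R i)" by (simp add: euclidean_representation)
  also have "\<dots> = (\<Sum>i\<in>Basis. (w \<bullet> i) *\<^sub>R L i)"
    using assms(1) by (simp add: linear_sum linear_scale)
  also have "\<dots> = (\<Sum>i\<leftarrow>bs. (w \<bullet> i) *\<^sub>R L i)"
    using assms(2,3) by (metis sum_list_distinct_conv_sum_set)
  finally show ?thesis .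
qed

lemma scaleR_sum_list: fixes f :: "'x \<Rightarrow> 'b::real_vector" shows "c *\<^sub>R (\<Sum>x\<leftarrow>xs. f x) = (\<Sum>x\<leftarrow>xs. c *\<^sub>R f x)"
  by (induction xs) (auto simp: scaleR_add_right)

lemma smooth_chain: "smooth k \<Longrightarrow> smooth g \<Longrightarrow>
  ((\<lambda>x. k (g x)) has_derivative (\<lambda>h. frechet_derivative k (at (g x)) (frechet_derivative g (at x) h))) (at x)"
  using diff_chain_at[OF smooth_hasd[of g x] smooth_hasd[of k "g x"]] by (simp add: o_def)

lemma smooth_comp_gen:
  fixes k :: "'b::euclidean_space \<Rightarrow> 'c::real_normed_vector" and g :: "'a::real_normed_vector \<Rightarrow> 'b"
  assumes "smooth k" "smooth g" "smooth \<phi>"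
  shows "smooth (\<lambda>x. \<phi> x *\<^sub>R k (g x))"
proof -
  obtain bs :: "'b list" where bs: "set bs = Basis" "distinct bs"
    using finite_distinct_list[OF finite_Basis] by blast
  show ?thesis
  proof (rule smooth_coinduct[where S="\<lambda>f. \<exists>ts::(('a\<Rightarrow>real) \<times> ('b\<Rightarrow>'c) \<times> ('a\<Rightarrow>'b)) list. (\<forall>t\<in>set ts. smooth (fst t) \<and> smooth (fst (snd t)) \<and> smooth (snd (snd t)))
     \<and> f = (\<lambda>x. \<Sum>t\<leftarrow>ts. fst t x *\<^sub>R fst (snd t) (snd (snd t) x))"])
    show "\<exists>ts::(('a\<Rightarrow>real) \<times> ('b\<Rightarrow>'c) \<times> ('a\<Rightarrow>'b)) list. (\<forall>t\<in>set ts. smooth (fst t) \<and> smooth (fst (snd t)) \<and> smooth (snd (snd t)))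
     \<and> (\<lambda>x. \<phi> x *\<^sub>R k (g x)) = (\<lambda>x. \<Sum>t\<leftarrow>ts. fst t x *\<^sub>R fst (snd t) (snd (snd t) x))"
      by (intro exI[of _ "[(\<phi>,k,g)]"]) (simp add: assms)
  next
    fix f assume "\<exists>ts::(('a\<Rightarrow>real) \<times> ('b\<Rightarrow>'c) \<times> ('a\<Rightarrow>'b)) list. (\<forall>t\<in>set ts. smooth (fst t) \<and> smooth (fst (snd t)) \<and> smooth (snd (snd t)))
     \<and> f = (\<lambda>x. \<Sum>t\<leftarrow>ts. fst t x *\<^sub>R fst (snd t) (snd (snd t) x))"
    then obtain ts :: "(('a\<Rightarrow>real) \<times> ('b\<Rightarrow>'c) \<times> ('a\<Rightarrow>'b)) list" where
      ts: "\<forall>t\<in>set ts. smooth (fst t) \<and> smooth (fst (snd t)) \<and> smooth (snd (snd t))"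
      and f: "f = (\<lambda>x. \<Sum>t\<leftarrow>ts. fst t x *\<^sub>R fst (snd t) (snd (snd t) x))" by blast
    define F' where "F' t x h = frechet_derivative (fst t) (at x) h *\<^sub>R fst (snd t) (snd (snd t) x)
        + fst t x *\<^sub>R frechet_derivative (fst (snd t)) (at (snd (snd t) x)) (frechet_derivative (snd (snd t)) (at x) h)"
      for t :: "('a\<Rightarrow>real) \<times> ('b\<Rightarrow>'c) \<times> ('a\<Rightarrow>'b)" and x h
    have hd: "(f has_derivative (\<lambda>h. \<Sum>t\<leftarrow>ts. F' t x h)) (at x)" for x
      unfolding f
    proof (rule has_derivative_sum_list[where F="\<lambda>t x. fst t x *\<^sub>R fst (snd t) (snd (snd t) x)"])
      fix t assume "t \<in> set ts"
      then have s: "smooth (fst t)" "smooth (fst (snd t))" "smooth (snd (snd t))" using ts by auto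
      show "((\<lambda>x. fst t x *\<^sub>R fst (snd t) (snd (snd t) x)) has_derivative F' t x) (at x)"
        unfolding F'_def
        by (rule has_derivative_scaleR[OF smooth_hasd[OF s(1)] smooth_chain[OF s(2,3)], THEN has_derivative_eq_rhs])
          (simp add: algebra_simps)
    qed
    then show "f differentiable_on UNIV" unfolding differentiable_on_def differentiable_def by blast
    fix v
    define ts' where "ts' = concat (map (\<lambda>t. (dir (fst t) v, fst (snd t), snd (snd t)) #
        map (\<lambda>i. (\<lambda>x. fst t x * (dir (snd (snd t)) v x \<bullet> i), dir (fst (snd t)) i, snd (snd t))) bs) ts)"
    have lin: "linear (frechet_derivative k' (at y))" if "smooth k'" for k' :: "'b \<Rightarrow> 'c" and y
      using smooth_hasd[OF that] has_derivative_linear by blast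
    have "dir f v = (\<lambda>x. \<Sum>t\<leftarrow>ts. F' t x v)"
      using dir_eq[OF hd] .
    also have "\<dots> = (\<lambda>x. \<Sum>t\<leftarrow>ts'. fst t x *\<^sub>R fst (snd t) (snd (snd t) x))"
    proof (rule ext)
      fix x
      have *: "F' t x v = (\<Sum>t\<leftarrow>(dir (fst t) v, fst (snd t), snd (snd t)) #
        map (\<lambda>i. (\<lambda>x. fst t x * (dir (snd (snd t)) v x \<bullet> i), dir (fst (snd t)) i, snd (snd t))) bs.
           fst t x *\<^sub>R fst (snd t) (snd (snd t) x))" if "t \<in> set ts" for t
      proof -
        have "frechet_derivative (fst (snd t)) (at (snd (snd t) x)) (dir (snd (snd t)) v x)
          = (\<Sum>i\<leftarrow>bs. (dir (snd (snd t)) v x \<bullet> i) *\<^sub>R frechet_derivative (fst (snd t)) (at (snd (snd t) x)) i)"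
          by (rule linear_basis_expand[OF lin bs]) (use that ts in blast)
        then show ?thesis
          by (simp add: F'_def dir_def scaleR_sum_list o_def)
      qed
      show "(\<Sum>t\<leftarrow>ts. F' t x v) = (\<Sum>t\<leftarrow>ts'. fst t x *\<^sub>R fst (snd t) (snd (snd t) x))"
        unfolding ts'_def using * by (induction ts) auto
    qed
    finally have "dir f v = (\<lambda>x. \<Sum>t\<leftarrow>ts'. fst t x *\<^sub>R fst (snd t) (snd (snd t) x))" .
    moreover have "\<forall>t\<in>set ts'. smooth (fst t) \<and> smooth (fst (snd t)) \<and> smooth (snd (snd t))"
      unfolding ts'_def using ts by (auto intro!: smooth_dir smooth_mult smooth_inner)
    ultimately show "\<exists>ts::(('a\<Rightarrow>real) \<times> ('b\<Rightarrow>'c) \<times> ('a\<Rightarrow>'b)) list. (\<forall>t\<in>set ts. smooth (fst t) \<and> smooth (fst (snd t)) \<and> smooth (snd (snd t)))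
     \<and> dir f v = (\<lambda>x. \<Sum>t\<leftarrow>ts. fst t x *\<^sub>R fst (snd t) (snd (snd t) x))" by blast
  qed
qed

lemma smooth_comp:
  fixes k :: "'b::euclidean_space \<Rightarrow> 'c::real_normed_vector" and g :: "'a::real_normed_vector \<Rightarrow> 'b"
  assumes "smooth k" "smooth g" shows "smooth (\<lambda>x. k (g x))"
  using smooth_comp_gen[OF assms smooth_const[of 1]] by simp

lemma smooth_add:
  fixes f g :: "'a::real_normed_vector\<Rightarrow>'b::real_normed_vector"
  assumes "smooth f" "smooth g" shows "smooth (\<lambda>x. f x + g x)"
proof (rule smooth_coinduct[where S="\<lambda>h. \<exists>f g. smooth f \<and> smooth g \<and> h = (\<lambda>x. f x + g x)"])
  show "\<exists>f' g'. smooth f' \<and> smooth g' \<and> (\<lambda>x. f x + g x) = (\<lambda>x. f' x + g' x)" using assms by blast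
next
  fix h :: "'a \<Rightarrow> 'b" assume "\<exists>f g. smooth f \<and> smooth g \<and> h = (\<lambda>x. f x + g x)"
  then obtain f g where fg: "smooth f" "smooth g" "h = (\<lambda>x. f x + g x)" by blast
  have hd: "(h has_derivative (\<lambda>v. frechet_derivative f (at x) v + frechet_derivative g (at x) v)) (at x)" for x
    unfolding fg(3) by (intro has_derivative_add smooth_hasd fg)
  then show "h differentiable_on UNIV" unfolding differentiable_on_def differentiable_def by blast
  fix v
  have "dir h v = (\<lambda>x. dir f v x + dir g v x)" using dir_eq[OF hd] by (simp add: dir_def)
  then show "\<exists>f g. smooth f \<and> smooth g \<and> dir h v = (\<lambda>x. f x + g x)" using fg smooth_dir by blast
qed

lemma smooth_sum:
  fixes f :: "'i \<Rightarrow> 'a::real_normed_vector\<Rightarrow>'b::real_normed_vector"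
  assumes "finite I" "\<And>i. i \<in> I \<Longrightarrow> smooth (f i)" shows "smooth (\<lambda>x. \<Sum>i\<in>I. f i x)"
  using assms by (induction I rule: finite_induct) (auto intro: smooth_add smooth_const)

lemma smooth_cscale: "smooth (f::'a::real_normed_vector\<Rightarrow>'b::real_normed_vector) \<Longrightarrow> smooth (\<lambda>x. c *\<^sub>R f x)"
  using smooth_scaleR[OF smooth_const] .

lemma smooth_diff: "smooth (f::'a::real_normed_vector\<Rightarrow>'b::real_normed_vector) \<Longrightarrow> smooth g \<Longrightarrow> smooth (\<lambda>x. f x - g x)"
  using smooth_add[of f "\<lambda>x. (-1) *\<^sub>R g x"] smooth_cscale by fastforce




locale setting =
  fixes \<Omega> :: "'a::euclidean_space \<Rightarrow> 'a \<Rightarrow> real" and A :: "'a \<Rightarrow> 'a"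
  assumes symp: "symplectic_form \<Omega>" and linA: "linear A"
    and skew: "\<forall>x y. \<Omega> (A x) y + \<Omega> x (A y) = 0" and invo: "A \<circ> A = id"
begin

lemma bil: "bilinear \<Omega>" using symp by (simp add: symplectic_form_def)
lemma bb: "bounded_bilinear \<Omega>" using bil bilinear_conv_bounded_bilinear by blast
lemma alt: "\<Omega> x x = 0" using symp by (simp add: symplectic_form_def)
lemma nondeg: "(\<And>y. \<Omega> x y = 0) \<Longrightarrow> x = 0" using symp by (simp add: symplectic_form_def)

lemmas Oadd = bounded_bilinear.add_left[OF bb] bounded_bilinear.add_right[OF bb]
  bounded_bilinear.diff_left[OF bb] bounded_bilinear.diff_right[OF bb]
  bounded_bilinear.scaleR_left[OF bb] bounded_bilinear.scaleR_right[OF bb]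
  bounded_bilinear.zero_left[OF bb] bounded_bilinear.zero_right[OF bb]
  bounded_bilinear.minus_left[OF bb] bounded_bilinear.minus_right[OF bb]

lemma antisym: "\<Omega> x y = - \<Omega> y x"
proof -
  have "\<Omega> (x+y) (x+y) = \<Omega> x x + \<Omega> x y + \<Omega> y x + \<Omega> y y" by (simp add: Oadd)
  then show ?thesis by (simp add: alt)
qed

lemma AA[simp]: "A (A x) = x" using invo by (metis comp_apply id_apply)
lemma Aadd: "A (x + y) = A x + A y" using linA by (simp add: linear_add)
lemma Adiff: "A (x - y) = A x - A y" using linA by (simp add: linear_diff)
lemma Ascale: "A (c *\<^sub>R x) = c *\<^sub>R A x" using linA by (simp add: linear_scale)
lemma Azero: "A 0 = 0" using linA by (simp add: linear_0)

definition P where "P x = (1/2) *\<^sub>R (x + A x)"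
definition M where "M x = (1/2) *\<^sub>R (x - A x)"

lemma linP: "linear P" unfolding P_def using linA
  by (intro linearI) (auto simp: Aadd Ascale algebra_simps)
lemma linM: "linear M" unfolding M_def using linA
  by (intro linearI) (auto simp: Aadd Ascale algebra_simps)

lemma PM: "P x + M x = x"
proof -
  have "P x + M x = (1/2) *\<^sub>R ((x + A x) + (x - A x))" unfolding P_def M_def by (simp only: scaleR_add_right)
  also have "(x + A x) + (x - A x) = 2 *\<^sub>R x" by (simp add: scaleR_2)
  finally show ?thesis by simp
qed
lemma AP: "A (P x) = P x" unfolding P_def by (simp add: Aadd Ascale add.commute)
lemma AM: "A (M x) = - M x" unfolding M_def by (simp add: Adiff Ascale scaleR_diff_right)
lemma PMz[simp]: "P (M x) = 0" by (simp add: P_def AM)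
lemma MPz[simp]: "M (P x) = 0" by (simp add: M_def AP)
lemma PP[simp]: "P (P x) = P x" using PM[of "P x"] by simp
lemma MM[simp]: "M (M x) = M x" using PM[of "M x"] by simp

lemma Pform: "P x = (1/2) *\<^sub>R (A x + x)" by (simp add: P_def add.commute)
lemma Mform: "M x = - ((1/2) *\<^sub>R (A x - x))" by (simp add: M_def scaleR_diff_right)
lemma Pdiff: "P x - x = (1/2) *\<^sub>R (A x - x)"
proof -
  have "P x - x = P x - (P x + M x)" by (simp add: PM)
  also have "\<dots> = - M x" by simp
  finally show ?thesis by (simp add: Mform)
qed
lemma Mdiff: "M x - x = - ((1/2) *\<^sub>R (A x + x))"
proof -
  have "M x - x = M x - (P x + M x)" by (simp add: PM)
  also have "\<dots> = - P x" by simp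
  finally show ?thesis by (simp add: Pform)
qed
lemma zP: "z - P z = M z" using add_diff_cancel_left'[of "P z" "M z"] by (simp only: PM)
lemma zM: "z - M z = P z" using add_diff_cancel_right'[of "P z" "M z"] by (simp only: PM)

lemma inVp: "x \<in> Vplus A \<longleftrightarrow> P x = x"
proof -
  have "P x = x \<longleftrightarrow> P x - x = 0" by (rule eq_iff_diff_eq_0)
  then show ?thesis unfolding Vplus_def Pdiff by simp
qed
lemma inVm: "x \<in> Vminus A \<longleftrightarrow> M x = x"
proof -
  have "M x = x \<longleftrightarrow> M x - x = 0" by (rule eq_iff_diff_eq_0)
  then show ?thesis unfolding Vminus_def Mdiff by simp
qed
lemma inVp': "x \<in> Vplus A \<longleftrightarrow> M x = 0" unfolding Vplus_def using Mform[of x] by simp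
lemma inVm': "x \<in> Vminus A \<longleftrightarrow> P x = 0" unfolding Vminus_def using Pform[of x] by simp
lemma P_in[simp]: "P x \<in> Vplus A" by (simp add: inVp)
lemma M_in[simp]: "M x \<in> Vminus A" by (simp add: inVm)

lemma Pplus_eq: "Pplus A = P"
proof
  fix z
  show "Pplus A z = P z" unfolding Pplus_def
  proof (rule the_equality)
    show "P z \<in> Vplus A \<and> z - P z \<in> Vminus A" by (simp add: zP)
    fix p assume "p \<in> Vplus A \<and> z - p \<in> Vminus A"
    then have "P p = p" "P (z - p) = 0" by (auto simp: inVp inVm')
    moreover have "P (z - p) = P z - P p" using linP by (rule linear_diff)
    ultimately show "p = P z" by simp
  qed
qed

lemma Pminus_eq: "Pminus A = M"
proof
  fix z
  show "Pminus A z = M z" unfolding Pminus_def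
  proof (rule the_equality)
    show "M z \<in> Vminus A \<and> z - M z \<in> Vplus A" by (simp add: zM)
    fix p assume "p \<in> Vminus A \<and> z - p \<in> Vplus A"
    then have "M p = p" "M (z - p) = 0" by (auto simp: inVm inVp')
    moreover have "M (z - p) = M z - M p" using linM by (rule linear_diff)
    ultimately show "p = M z" by simp
  qed
qed

lemma iso_plus: "x \<in> Vplus A \<Longrightarrow> y \<in> Vplus A \<Longrightarrow> \<Omega> x y = 0"
proof -
  assume "x \<in> Vplus A" "y \<in> Vplus A"
  then have "A x = x" "A y = y" unfolding Vplus_def by auto
  then show ?thesis using skew[rule_format, of x y] by simp
qed
lemma iso_minus: "x \<in> Vminus A \<Longrightarrow> y \<in> Vminus A \<Longrightarrow> \<Omega> x y = 0"
proof -
  assume "x \<in> Vminus A" "y \<in> Vminus A"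
  then have "A x = - x" "A y = - y" unfolding Vminus_def by (auto simp: eq_neg_iff_add_eq_0)
  then show ?thesis using skew[rule_format, of x y] by (simp add: Oadd)
qed

lemma OPP[simp]: "\<Omega> (P x) (P y) = 0" by (simp add: iso_plus)
lemma OMM[simp]: "\<Omega> (M x) (M y) = 0" by (simp add: iso_minus)

lemma Odecomp: "\<Omega> x y = \<Omega> (P x) (M y) + \<Omega> (M x) (P y)"
proof -
  have "\<Omega> x y = \<Omega> (P x + M x) (P y + M y)" by (simp add: PM)
  then show ?thesis by (simp add: Oadd)
qed

lemma Lag_minus: assumes "\<And>y. y \<in> Vminus A \<Longrightarrow> \<Omega> w y = 0" shows "w \<in> Vminus A"
proof -
  have "\<Omega> (P w) y = 0" for y
  proof -
    have "\<Omega> (P w) y = \<Omega> (P (P w)) (M y) + \<Omega> (M (P w)) (P y)" by (rule Odecomp)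
    also have "\<dots> = \<Omega> (P w) (M y)" by (simp add: Oadd)
    also have "\<dots> = \<Omega> w (M y)" using Odecomp[of w "M y"] by (simp add: Oadd)
    also have "\<dots> = 0" using assms by simp
    finally show ?thesis .
  qed
  then have "P w = 0" by (rule nondeg)
  then show ?thesis by (simp add: inVm')
qed

lemma Lag_plus: assumes "\<And>y. y \<in> Vplus A \<Longrightarrow> \<Omega> w y = 0" shows "w \<in> Vplus A"
proof -
  have "\<Omega> (M w) y = 0" for y
  proof -
    have "\<Omega> (M w) y = \<Omega> (P (M w)) (M y) + \<Omega> (M (M w)) (P y)" by (rule Odecomp)
    also have "\<dots> = \<Omega> (M w) (P y)" by (simp add: Oadd)
    also have "\<dots> = \<Omega> w (P y)" using Odecomp[of w "P y"] by (simp add: Oadd)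
    also have "\<dots> = 0" using assms by simp
    finally show ?thesis .
  qed
  then have "M w = 0" by (rule nondeg)
  then show ?thesis by (simp add: inVp')
qed

lemma riesz: "\<exists>k. \<forall>y. \<Omega> k y = u \<bullet> y"
proof -
  define J where "J x = (\<Sum>i\<in>Basis. \<Omega> x i *\<^sub>R i)" for x
  have J: "J x \<bullet> y = \<Omega> x y" for x y
  proof -
    have "\<Omega> x y = \<Omega> x (\<Sum>i\<in>Basis. (y \<bullet> i) *\<^sub>R i)" by (simp add: euclidean_representation)
    also have "\<dots> = (\<Sum>i\<in>Basis. (y \<bullet> i) * \<Omega> x i)"
      by (simp add: bounded_bilinear.sum_right[OF bb] Oadd)
    also have "\<dots> = (\<Sum>i\<in>Basis. \<Omega> x i * (i \<bullet> y))" by (simp add: inner_commute mult.commute)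
    also have "\<dots> = J x \<bullet> y" by (simp add: J_def inner_sum_left)
    finally show ?thesis by simp
  qed
  have linJ: "linear J" unfolding J_def
    by (intro linearI) (simp_all add: Oadd scaleR_add_left sum.distrib scaleR_sum_right)
  have "inj J"
  proof (rule injI)
    fix x y assume "J x = J y"
    then have "\<Omega> (x - y) z = 0" for z using J[of x z] J[of y z] by (simp add: Oadd)
    then show "x = y" using nondeg by fastforce
  qed
  then have "surj J" using linJ linear_injective_imp_surjective by blast
  then obtain k where "J k = u" by (metis surjD)
  then show ?thesis using J by metis
qed

definition K where "K u = (SOME k. \<forall>y. \<Omega> k y = u \<bullet> y)"
lemma K: "\<Omega> (K u) y = u \<bullet> y" unfolding K_def using someI_ex[OF riesz] by blast

definition sad where "sad B x = (\<Sum>j\<in>Basis. \<Omega> x (B j) *\<^sub>R K j)"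

lemma sad_prop: assumes "linear B" shows "\<Omega> (sad B x) y = \<Omega> x (B y)"
proof -
  have "\<Omega> (sad B x) y = (\<Sum>j\<in>Basis. \<Omega> x (B j) * (j \<bullet> y))"
    unfolding sad_def by (simp add: bounded_bilinear.sum_left[OF bb] Oadd K)
  also have "\<dots> = \<Omega> x (\<Sum>j\<in>Basis. (j \<bullet> y) *\<^sub>R B j)"
    by (simp add: bounded_bilinear.sum_right[OF bb] Oadd mult.commute)
  also have "(\<Sum>j\<in>Basis. (j \<bullet> y) *\<^sub>R B j) = B y"
  proof -
    have "(\<Sum>j\<in>Basis. (j \<bullet> y) *\<^sub>R j) = y" by (subst inner_commute) (rule euclidean_representation)
    then have "B y = B (\<Sum>j\<in>Basis. (j \<bullet> y) *\<^sub>R j)" by simp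
    also have "\<dots> = (\<Sum>j\<in>Basis. (j \<bullet> y) *\<^sub>R B j)" using assms by (simp add: linear_sum linear_scale)
    finally show ?thesis by simp
  qed
  finally show ?thesis .
qed

lemma lin_sad: "linear (sad B)" unfolding sad_def
  by (intro linearI) (simp_all add: Oadd scaleR_add_left sum.distrib scaleR_sum_right)

lemma sadj_eq: assumes "linear B" shows "sadj \<Omega> B = sad B"
  unfolding sadj_def
proof (rule the_equality)
  show "linear (sad B) \<and> (\<forall>x y. \<Omega> (sad B x) y = \<Omega> x (B y))" using lin_sad sad_prop[OF assms] by blast
  fix C assume C: "linear C \<and> (\<forall>x y. \<Omega> (C x) y = \<Omega> x (B y))"
  show "C = sad B"
  proof
    fix x
    have "\<Omega> (C x - sad B x) y = 0" for y using C sad_prop[OF assms] by (simp add: Oadd)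
    then show "C x = sad B x" using nondeg by fastforce
  qed
qed

end



context setting begin

lemma blP: "bounded_linear P" using linP linear_conv_bounded_linear by blast
lemma blM: "bounded_linear M" using linM linear_conv_bounded_linear by blast
lemma Padd: "P (x + y) = P x + P y" using linP by (rule linear_add)
lemma Madd: "M (x + y) = M x + M y" using linM by (rule linear_add)
lemma Pzero[simp]: "P 0 = 0" using linP by (rule linear_0)
lemma Mzero[simp]: "M 0 = 0" using linM by (rule linear_0)
lemma P_Vp: "x \<in> Vplus A \<Longrightarrow> P x = x" by (simp add: inVp)
lemma M_Vp: "x \<in> Vplus A \<Longrightarrow> M x = 0" by (simp add: inVp')
lemma P_Vm: "x \<in> Vminus A \<Longrightarrow> P x = 0" by (simp add: inVm')
lemma M_Vm: "x \<in> Vminus A \<Longrightarrow> M x = x" by (simp add: inVm)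

lemma OmegaVm: "x \<in> Vminus A \<Longrightarrow> \<Omega> x u = \<Omega> x (P u)"
proof -
  assume x: "x \<in> Vminus A"
  have "\<Omega> x u = \<Omega> (P x) (M u) + \<Omega> (M x) (P u)" by (rule Odecomp)
  also have "\<dots> = \<Omega> x (P u)" using x by (simp add: P_Vm M_Vm Oadd)
  finally show ?thesis .
qed

definition Bd where "Bd F y = frechet_derivative (\<lambda>z. F (P z)) (at y)"

lemma hasB: "smooth (\<lambda>z. F (P z)) \<Longrightarrow> ((\<lambda>z. F (P z)) has_derivative Bd F y) (at y)"
  unfolding Bd_def by (rule smooth_hasd)

lemma linB: "smooth (\<lambda>z. F (P z)) \<Longrightarrow> linear (Bd F y)"
  using hasB has_derivative_linear by blast

lemma B_P: assumes "smooth (\<lambda>z. F (P z))" shows "Bd F y v = Bd F (P y) (P v)"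
proof -
  have "((\<lambda>z. (\<lambda>w. F (P w)) (P z)) has_derivative (\<lambda>v. Bd F (P y) (P v))) (at y)"
    using diff_chain_at[OF bounded_linear_imp_has_derivative[OF blP] hasB[OF assms, of "P y"]]
    by (simp add: o_def)
  then have "((\<lambda>z. F (P z)) has_derivative (\<lambda>v. Bd F (P y) (P v))) (at y)" by simp
  then show ?thesis using hasB[OF assms] has_derivative_unique by metis
qed

lemma B_Vm: "smooth (\<lambda>z. F (P z)) \<Longrightarrow> v \<in> Vminus A \<Longrightarrow> Bd F y v = 0"
  using B_P[of F y v] linB[of F "P y"] by (simp add: P_Vm linear_0)

lemma B_range: assumes "smooth (\<lambda>z. F (P z))" "\<And>x. x \<in> Vplus A \<Longrightarrow> F x \<in> Vplus A"
  shows "P (Bd F y v) = Bd F y v"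
proof -
  have eq: "(\<lambda>z. F (P z)) = (\<lambda>z. P (F (P z)))" using assms(2) by (simp add: P_Vp)
  have "((\<lambda>z. P (F (P z))) has_derivative (\<lambda>v. P (Bd F y v))) (at y)"
    using bounded_linear.has_derivative[OF blP hasB[OF assms(1)]] .
  then have "((\<lambda>z. F (P z)) has_derivative (\<lambda>v. P (Bd F y v))) (at y)" using eq by simp
  then show ?thesis using hasB[OF assms(1)] has_derivative_unique by metis
qed

lemma B_chain: assumes "smooth (\<lambda>z. F (P z))" "smooth (\<lambda>z. H (P z))" "\<And>x. x \<in> Vplus A \<Longrightarrow> H x \<in> Vplus A"
  shows "Bd (\<lambda>x. F (H x)) y v = Bd F (H (P y)) (Bd H y v)"
proof -
  have eq: "(\<lambda>z. F (H (P z))) = (\<lambda>z. (\<lambda>w. F (P w)) ((\<lambda>z. H (P z)) z))" using assms(3) by (simp add: P_Vp)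
  have "((\<lambda>z. F (H (P z))) has_derivative (\<lambda>v. Bd F (H (P y)) (Bd H y v))) (at y)"
    unfolding eq using diff_chain_at[OF hasB[OF assms(2)] hasB[OF assms(1), of "H (P y)"]]
    by (simp add: o_def P_Vp assms(3))
  then show ?thesis unfolding Bd_def using frechet_derivative_at by metis
qed

lemma B_id: "Bd (\<lambda>x. x) y = P"
proof -
  have "((\<lambda>z. P z) has_derivative P) (at y)" using blP bounded_linear_imp_has_derivative by blast
  then show ?thesis unfolding Bd_def using frechet_derivative_at by metis
qed

definition good where "good F \<longleftrightarrow> (\<forall>x\<in>Vplus A. F x \<in> Vplus A) \<and> smooth (\<lambda>z. F (P z))"

lemma B_inv: assumes "good F" "good H" "\<And>x. x \<in> Vplus A \<Longrightarrow> H (F x) = x" "y \<in> Vplus A"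
  shows "Bd H (F y) (Bd F y v) = P v"
proof -
  have "Bd (\<lambda>x. H (F x)) y v = Bd H (F (P y)) (Bd F y v)"
    using assms(1,2) unfolding good_def by (intro B_chain) auto
  moreover have "(\<lambda>z. H (F (P z))) = (\<lambda>z. P z)" using assms(3) by simp
  then have "Bd (\<lambda>x. H (F x)) y = P" using B_id unfolding Bd_def by simp
  ultimately show ?thesis using assms(4) by (simp add: P_Vp)
qed

end



context setting begin

lemma DiffD:
  assumes "f \<in> Diff_plus A"
  obtains h where "good f" "good h" "f \<in> extensional (Vplus A)"
    "\<And>x. x \<in> Vplus A \<Longrightarrow> h (f x) = x" "\<And>x. x \<in> Vplus A \<Longrightarrow> f (h x) = x"
  using assms unfolding Diff_plus_def good_def Pplus_eq o_def by (auto simp: Pi_def)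

lemma sad_B_Vm: "good F \<Longrightarrow> sad (Bd F y) x \<in> Vminus A"
proof (rule Lag_minus)
  fix u assume "good F" "u \<in> Vminus A"
  then have "Bd F y u = 0" using B_Vm unfolding good_def by blast
  moreover have "linear (Bd F y)" using linB \<open>good F\<close> unfolding good_def by blast
  ultimately show "\<Omega> (sad (Bd F y) x) u = 0" using sad_prop by (simp add: Oadd)
qed

lemma lift_key:
  assumes "good f" "good h" "\<And>x. x \<in> Vplus A \<Longrightarrow> h (f x) = x" "\<And>x. x \<in> Vplus A \<Longrightarrow> f (h x) = x"
    "y \<in> Vplus A" "x \<in> Vminus A"
  shows "(THE w. w \<in> Vminus A \<and> sadj \<Omega> (Bd f y) w = x) = sad (Bd h (f y)) x"
proof -
  have linf: "linear (Bd f y)" and linh: "linear (Bd h (f y))" using assms(1,2) linB unfolding good_def by auto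
  have fy: "f y \<in> Vplus A" using assms(1,5) unfolding good_def by auto
  have inv1: "Bd h (f y) (Bd f y v) = P v" for v by (rule B_inv[OF assms(1,2,3,5)])
  have inv2: "Bd f y (Bd h (f y) v) = P v" for v
    using B_inv[OF assms(2,1) assms(4) fy, of v] assms(3)[OF assms(5)] by simp
  show ?thesis unfolding sadj_eq[OF linf]
  proof (rule the_equality)
    show "sad (Bd h (f y)) x \<in> Vminus A \<and> sad (Bd f y) (sad (Bd h (f y)) x) = x"
    proof
      show "sad (Bd h (f y)) x \<in> Vminus A" using sad_B_Vm assms(2) by blast
      have "\<Omega> (sad (Bd f y) (sad (Bd h (f y)) x) - x) u = 0" for u
      proof -
        have "\<Omega> (sad (Bd f y) (sad (Bd h (f y)) x)) u = \<Omega> x (P u)"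
          by (simp add: sad_prop linf linh inv1)
        also have "\<dots> = \<Omega> x u" using OmegaVm[OF assms(6)] by simp
        finally show ?thesis by (simp add: Oadd)
      qed
      then show "sad (Bd f y) (sad (Bd h (f y)) x) = x" using nondeg by (metis eq_iff_diff_eq_0)
    qed
    fix w assume w: "w \<in> Vminus A \<and> sad (Bd f y) w = x"
    have "\<Omega> (w - sad (Bd h (f y)) x) u = 0" for u
    proof -
      have "\<Omega> w u = \<Omega> w (P u)" using OmegaVm w by blast
      also have "\<dots> = \<Omega> w (Bd f y (Bd h (f y) u))" by (simp add: inv2)
      also have "\<dots> = \<Omega> x (Bd h (f y) u)" using sad_prop[OF linf, of w "Bd h (f y) u"] w by simp
      also have "\<dots> = \<Omega> (sad (Bd h (f y)) x) u" using sad_prop[OF linh] by simp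
      finally show ?thesis by (simp add: Oadd)
    qed
    then show "w = sad (Bd h (f y)) x" using nondeg by (metis eq_iff_diff_eq_0)
  qed
qed

lemma lift_formula:
  assumes "good f" "good h" "\<And>x. x \<in> Vplus A \<Longrightarrow> h (f x) = x" "\<And>x. x \<in> Vplus A \<Longrightarrow> f (h x) = x"
  shows "lift \<Omega> A f = (\<lambda>z. f (P z) + sad (Bd h (f (P z))) (M z))"
proof
  fix z
  have "frechet_derivative (f \<circ> Pplus A) (at (Pplus A z)) = Bd f (P z)" unfolding Bd_def Pplus_eq o_def ..
  then show "lift \<Omega> A f z = f (P z) + sad (Bd h (f (P z))) (M z)"
    unfolding lift_def using lift_key[OF assms P_in M_in] by (simp add: Pplus_eq Pminus_eq)
qed

lemma sad_expand: "sad B x = (\<Sum>j\<in>Basis. \<Omega> x (B j) *\<^sub>R K j)" by (simp add: sad_def)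

lemma smooth_lift_formula:
  assumes "good f" "good h"
  shows "smooth (\<lambda>z. f (P z) + sad (Bd h (f (P z))) (M z))"
proof (rule smooth_add)
  show "smooth (\<lambda>z. f (P z))" using assms unfolding good_def by blast
  have "smooth (\<lambda>z. \<Sum>j\<in>Basis. \<Omega> (M z) (Bd h (f (P z)) j) *\<^sub>R K j)"
  proof (rule smooth_sum[OF finite_Basis])
    fix j :: 'a assume "j \<in> Basis"
    have sh: "smooth (dir (\<lambda>z. h (P z)) j)" using assms(2) smooth_dir unfolding good_def by blast
    have "smooth (\<lambda>z. dir (\<lambda>z. h (P z)) j (f (P z)))"
      by (rule smooth_comp[OF sh]) (use assms(1) in \<open>simp add: good_def\<close>)
    then have s1: "smooth (\<lambda>z. Bd h (f (P z)) j)" by (simp add: Bd_def dir_def)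
    have "smooth (\<lambda>z. \<Omega> (M z) (Bd h (f (P z)) j))"
      by (rule smooth_bilinear[OF bb smooth_linear[OF linM] s1])
    then show "smooth (\<lambda>z. \<Omega> (M z) (Bd h (f (P z)) j) *\<^sub>R K j)"
      by (rule smooth_scaleR[OF _ smooth_const])
  qed
  then show "smooth (\<lambda>z. sad (Bd h (f (P z))) (M z))" by (simp add: sad_def)
qed

end



context setting begin

lemma sad_inv:
  assumes "good f" "good h" "\<And>x. x \<in> Vplus A \<Longrightarrow> h (f x) = x"
    "y \<in> Vplus A" "x \<in> Vminus A"
  shows "sad (Bd f y) (sad (Bd h (f y)) x) = x"
proof -
  have linf: "linear (Bd f y)" and linh: "linear (Bd h (f y))" using assms(1,2) linB unfolding good_def by auto
  have inv1: "Bd h (f y) (Bd f y v) = P v" for v by (rule B_inv[OF assms(1,2,3,4)])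
  have "\<Omega> (sad (Bd f y) (sad (Bd h (f y)) x) - x) u = 0" for u
  proof -
    have "\<Omega> (sad (Bd f y) (sad (Bd h (f y)) x)) u = \<Omega> x (P u)"
      by (simp add: sad_prop linf linh inv1)
    also have "\<dots> = \<Omega> x u" using OmegaVm[OF assms(5), of u] by (rule sym)
    finally show ?thesis by (simp add: Oadd)
  qed
  then show ?thesis using nondeg by (metis eq_iff_diff_eq_0)
qed

lemma sad_comp: assumes "linear X" "linear Y" shows "sad (\<lambda>v. X (Y v)) x = sad Y (sad X x)"
proof -
  have "linear (\<lambda>v. X (Y v))" using assms linear_compose[OF assms(2,1)] by (simp add: o_def)
  then have "\<Omega> (sad (\<lambda>v. X (Y v)) x - sad Y (sad X x)) u = 0" for u
    using assms by (simp add: sad_prop Oadd)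
  then show ?thesis using nondeg by (metis eq_iff_diff_eq_0)
qed

lemma sad_P: "sad P x = M x"
proof -
  have "\<Omega> (sad P x - M x) u = 0" for u
  proof -
    have "\<Omega> (sad P x) u = \<Omega> x (P u)" by (simp add: sad_prop linP)
    also have "\<dots> = \<Omega> (P x) (M (P u)) + \<Omega> (M x) (P (P u))" by (rule Odecomp)
    also have "\<dots> = \<Omega> (M x) (P u)" by (simp add: Oadd)
    also have "\<dots> = \<Omega> (M x) u" using OmegaVm[OF M_in, of x u] by (rule sym)
    finally show ?thesis by (simp add: Oadd)
  qed
  then show ?thesis using nondeg by (metis eq_iff_diff_eq_0)
qed

lemma sad_zero: "sad B 0 = 0" using lin_sad linear_0 by blast

lemma good_comp: assumes "good f" "good k" shows "good (\<lambda>x. f (k x))"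
proof -
  have kV: "k x \<in> Vplus A" if "x \<in> Vplus A" for x using assms(2) that unfolding good_def by blast
  have fV: "f x \<in> Vplus A" if "x \<in> Vplus A" for x using assms(1) that unfolding good_def by blast
  have sf: "smooth (\<lambda>w. f (P w))" and sk: "smooth (\<lambda>z. k (P z))" using assms unfolding good_def by blast+
  have eq: "(\<lambda>z. f (k (P z))) = (\<lambda>z. (\<lambda>w. f (P w)) ((\<lambda>z. k (P z)) z))"
  proof
    fix z show "f (k (P z)) = (\<lambda>w. f (P w)) ((\<lambda>z. k (P z)) z)" using P_Vp[OF kV[OF P_in]] by simp
  qed
  have "smooth (\<lambda>z. f (k (P z)))" unfolding eq by (rule smooth_comp[OF sf sk])
  moreover have "\<forall>x\<in>Vplus A. f (k x) \<in> Vplus A" using fV kV by blast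
  ultimately show ?thesis unfolding good_def by blast
qed

lemma good_cong: "good f \<Longrightarrow> (\<And>x. x \<in> Vplus A \<Longrightarrow> g x = f x) \<Longrightarrow> good g"
proof -
  assume a: "good f" "\<And>x. x \<in> Vplus A \<Longrightarrow> g x = f x"
  then have "(\<lambda>z. g (P z)) = (\<lambda>z. f (P z))" by simp
  with a show "good g" unfolding good_def by simp
qed

lemma lift_hom:
  assumes f: "f \<in> Diff_plus A" and k: "k \<in> Diff_plus A"
  shows "lift \<Omega> A (compose (Vplus A) f k) = lift \<Omega> A f \<circ> lift \<Omega> A k"
proof -
  obtain fi where f1: "good f" "good fi" "\<And>x. x \<in> Vplus A \<Longrightarrow> fi (f x) = x" "\<And>x. x \<in> Vplus A \<Longrightarrow> f (fi x) = x"
    using DiffD[OF f] by metis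
  obtain ki where k1: "good k" "good ki" "\<And>x. x \<in> Vplus A \<Longrightarrow> ki (k x) = x" "\<And>x. x \<in> Vplus A \<Longrightarrow> k (ki x) = x"
    using DiffD[OF k] by metis
  have fV: "x \<in> Vplus A \<Longrightarrow> f x \<in> Vplus A" for x using f1 unfolding good_def by auto
  have kV: "x \<in> Vplus A \<Longrightarrow> k x \<in> Vplus A" for x using k1 unfolding good_def by auto
  have fiV: "x \<in> Vplus A \<Longrightarrow> fi x \<in> Vplus A" for x using f1 unfolding good_def by auto
  define c where "c = compose (Vplus A) f k"
  have cV: "x \<in> Vplus A \<Longrightarrow> c x = f (k x)" for x by (simp add: c_def compose_def)
  have gc: "good c" using good_cong[OF good_comp[OF f1(1) k1(1)]] cV by blast
  have gci: "good (\<lambda>x. ki (fi x))" using good_comp[OF k1(2) f1(2)] .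
  have ci1: "x \<in> Vplus A \<Longrightarrow> ki (fi (c x)) = x" for x using cV f1(3) k1(3) kV by simp
  have ci2: "x \<in> Vplus A \<Longrightarrow> c (ki (fi x)) = x" for x using cV f1(4) k1(4) fiV k1 unfolding good_def by auto
  have Lc: "lift \<Omega> A c = (\<lambda>z. c (P z) + sad (Bd (\<lambda>x. ki (fi x)) (c (P z))) (M z))"
    by (rule lift_formula[OF gc gci ci1 ci2])
  have Lf: "lift \<Omega> A f = (\<lambda>z. f (P z) + sad (Bd fi (f (P z))) (M z))" by (rule lift_formula[OF f1])
  have Lk: "lift \<Omega> A k = (\<lambda>z. k (P z) + sad (Bd ki (k (P z))) (M z))" by (rule lift_formula[OF k1])
  show ?thesis unfolding c_def[symmetric]
  proof
    fix z
    define s where "s = sad (Bd ki (k (P z))) (M z)"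
    have sV: "s \<in> Vminus A" unfolding s_def using sad_B_Vm k1(2) by blast
    have kpz: "k (P z) \<in> Vplus A" using kV by simp
    have Pw: "P (k (P z) + s) = k (P z)" using sV kpz by (simp add: Padd P_Vp P_Vm)
    have Mw: "M (k (P z) + s) = s" using sV kpz by (simp add: Madd M_Vp M_Vm)
    have q: "P (f (k (P z))) = f (k (P z))" using fV kpz P_Vp by blast
    have chain: "Bd (\<lambda>x. ki (fi x)) q = (\<lambda>v. Bd ki (fi (P q)) (Bd fi q v))" for q
      using B_chain[of ki fi q] k1(2) f1(2) unfolding good_def by auto
    have "(lift \<Omega> A f \<circ> lift \<Omega> A k) z = f (k (P z)) + sad (Bd fi (f (k (P z)))) s"
      unfolding Lf Lk o_def s_def[symmetric] Pw Mw ..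
    also have "\<dots> = f (k (P z)) + sad (Bd (\<lambda>x. ki (fi x)) (f (k (P z)))) (M z)"
    proof -
      have "sad (Bd (\<lambda>x. ki (fi x)) (f (k (P z)))) (M z)
          = sad (\<lambda>v. Bd ki (k (P z)) (Bd fi (f (k (P z))) v)) (M z)"
        unfolding chain q f1(3)[OF kpz] ..
      also have "\<dots> = sad (Bd fi (f (k (P z)))) s"
        unfolding s_def using linB f1(2) k1(2) unfolding good_def by (intro sad_comp) auto
      finally show ?thesis by simp
    qed
    also have "\<dots> = lift \<Omega> A c z" unfolding Lc using cV by simp
    finally show "lift \<Omega> A c z = (lift \<Omega> A f \<circ> lift \<Omega> A k) z" by simp
  qed
qed

lemma lift_on_Vp: assumes "f \<in> Diff_plus A" "x \<in> Vplus A" shows "lift \<Omega> A f x = f x"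
proof -
  obtain fi where f1: "good f" "good fi" "\<And>x. x \<in> Vplus A \<Longrightarrow> fi (f x) = x" "\<And>x. x \<in> Vplus A \<Longrightarrow> f (fi x) = x"
    using DiffD[OF assms(1)] by metis
  have "lift \<Omega> A f x = f (P x) + sad (Bd fi (f (P x))) (M x)" using lift_formula[OF f1] by simp
  then show ?thesis using assms(2) by (simp add: P_Vp M_Vp sad_zero)
qed

lemma lift_inj: "inj_on (lift \<Omega> A) (Diff_plus A)"
proof (rule inj_onI)
  fix f g assume f: "f \<in> Diff_plus A" and g: "g \<in> Diff_plus A" and eq: "lift \<Omega> A f = lift \<Omega> A g"
  have ef: "f \<in> extensional (Vplus A)" and eg: "g \<in> extensional (Vplus A)"
    using f g unfolding Diff_plus_def by auto
  show "f = g"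
  proof (rule extensionalityI[OF ef eg])
    fix x assume "x \<in> Vplus A"
    then show "f x = g x" using lift_on_Vp f g eq by metis
  qed
qed

end



context setting begin

lemma smooth_Q:
  assumes "good f" "good h"
  shows "smooth (\<lambda>z. sad (Bd h (f (P z))) (M z))"
proof -
  have "smooth (\<lambda>z. \<Sum>j\<in>Basis. \<Omega> (M z) (Bd h (f (P z)) j) *\<^sub>R K j)"
  proof (rule smooth_sum[OF finite_Basis])
    fix j :: 'a assume "j \<in> Basis"
    have sh: "smooth (dir (\<lambda>z. h (P z)) j)" using assms(2) smooth_dir unfolding good_def by blast
    have "smooth (\<lambda>z. dir (\<lambda>z. h (P z)) j (f (P z)))"
      by (rule smooth_comp[OF sh]) (use assms(1) in \<open>simp add: good_def\<close>)
    then have s1: "smooth (\<lambda>z. Bd h (f (P z)) j)" by (simp add: Bd_def dir_def)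
    have "smooth (\<lambda>z. \<Omega> (M z) (Bd h (f (P z)) j))"
      by (rule smooth_bilinear[OF bb smooth_linear[OF linM] s1])
    then show "smooth (\<lambda>z. \<Omega> (M z) (Bd h (f (P z)) j) *\<^sub>R K j)"
      by (rule smooth_scaleR[OF _ smooth_const])
  qed
  then show ?thesis by (simp add: sad_def)
qed

lemma two_M: "x - A x = 2 *\<^sub>R M x" by (simp add: M_def)

lemma theta_eq: "theta \<Omega> A z v = \<Omega> (M z) v"
  unfolding theta_def two_M by (simp add: Oadd)

lemma good_id: "good (\<lambda>x. x)" unfolding good_def using smooth_linear[OF linP] by simp

lemma lift_id: "lift \<Omega> A (restrict (\<lambda>x. x) (Vplus A)) = id"
proof -
  have g: "good (restrict (\<lambda>x. x) (Vplus A))" by (rule good_cong[OF good_id]) simp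
  have "lift \<Omega> A (restrict (\<lambda>x. x) (Vplus A)) = (\<lambda>z. restrict (\<lambda>x. x) (Vplus A) (P z) + sad (Bd (\<lambda>x. x) (restrict (\<lambda>x. x) (Vplus A) (P z))) (M z))"
    by (rule lift_formula[OF g good_id]) auto
  also have "\<dots> = id" by (rule ext) (simp add: B_id sad_P PM)
  finally show ?thesis .
qed

lemma restrict_inv_Diff:
  assumes "good f" "good fi" "\<And>x. x \<in> Vplus A \<Longrightarrow> fi (f x) = x" "\<And>x. x \<in> Vplus A \<Longrightarrow> f (fi x) = x"
  shows "restrict fi (Vplus A) \<in> Diff_plus A"
proof -
  have g: "good (restrict fi (Vplus A))" by (rule good_cong[OF assms(2)]) simp
  show ?thesis unfolding Diff_plus_def Pplus_eq o_def
    using g assms unfolding good_def by (auto simp: Pi_def intro!: exI[of _ f])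
qed

lemma lift_pullback:
  assumes "good f" "good h" "\<And>x. x \<in> Vplus A \<Longrightarrow> h (f x) = x" "\<And>x. x \<in> Vplus A \<Longrightarrow> f (h x) = x"
  shows "pullback_theta \<Omega> A (lift \<Omega> A f) = theta \<Omega> A"
proof (intro ext)
  fix z v
  define Q where "Q z = sad (Bd h (f (P z))) (M z)" for z
  have G: "lift \<Omega> A f = (\<lambda>z. f (P z) + Q z)" unfolding Q_def by (rule lift_formula[OF assms])
  have sQ: "smooth Q" unfolding Q_def[abs_def] by (rule smooth_Q[OF assms(1,2)])
  have QV: "Q z \<in> Vminus A" for z unfolding Q_def using sad_B_Vm assms(2) by blast
  define DQ where "DQ = frechet_derivative Q (at z)"
  have hQ: "(Q has_derivative DQ) (at z)" unfolding DQ_def by (rule smooth_hasd[OF sQ])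
  have "((\<lambda>z. M (Q z)) has_derivative (\<lambda>v. M (DQ v))) (at z)"
    by (rule bounded_linear.has_derivative[OF blM hQ])
  moreover have "(\<lambda>z. M (Q z)) = Q" using QV by (simp add: M_Vm)
  ultimately have "(Q has_derivative (\<lambda>v. M (DQ v))) (at z)" by simp
  then have MDQ: "M (DQ v) = DQ v" using hQ has_derivative_unique by metis
  have sf: "smooth (\<lambda>z. f (P z))" using assms(1) unfolding good_def by blast
  have hG: "(lift \<Omega> A f has_derivative (\<lambda>v. Bd f z v + DQ v)) (at z)"
    unfolding G by (rule has_derivative_add[OF hasB[OF sf] hQ])
  have dG: "frechet_derivative (lift \<Omega> A f) (at z) v = Bd f z v + DQ v"
    using frechet_derivative_at[OF hG] by metis
  have fPz: "f (P z) \<in> Vplus A" using assms(1) unfolding good_def by auto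
  have MG: "M (lift \<Omega> A f z) = Q z" unfolding G using QV fPz by (simp add: Madd M_Vp M_Vm)
  have linf: "linear (Bd f (P z))" using linB sf by blast
  have "pullback_theta \<Omega> A (lift \<Omega> A f) z v = \<Omega> (Q z) (Bd f z v + DQ v)"
    unfolding pullback_theta_def dG two_M MG by (simp add: Oadd)
  also have "\<dots> = \<Omega> (Q z) (Bd f z v)"
    using iso_minus[OF QV, of "DQ v"] MDQ by (simp add: Oadd inVm)
  also have "\<dots> = \<Omega> (Q z) (Bd f (P z) (P v))" using B_P[OF sf] by metis
  also have "\<dots> = \<Omega> (sad (Bd f (P z)) (Q z)) (P v)" by (simp add: sad_prop linf)
  also have "sad (Bd f (P z)) (Q z) = M z" unfolding Q_def by (rule sad_inv[OF assms(1,2,3) P_in M_in])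
  also have "\<Omega> (M z) (P v) = \<Omega> (M z) v" using OmegaVm[OF M_in, of z v] by (rule sym)
  finally show "pullback_theta \<Omega> A (lift \<Omega> A f) z v = theta \<Omega> A z v" by (simp add: theta_eq)
qed

lemma lift_Aut: assumes "f \<in> Diff_plus A" shows "lift \<Omega> A f \<in> Aut \<Omega> A"
proof -
  obtain fi where f1: "good f" "good fi" "\<And>x. x \<in> Vplus A \<Longrightarrow> fi (f x) = x" "\<And>x. x \<in> Vplus A \<Longrightarrow> f (fi x) = x"
    using DiffD[OF assms] by metis
  define fi' where "fi' = restrict fi (Vplus A)"
  have fi'D: "fi' \<in> Diff_plus A" unfolding fi'_def by (rule restrict_inv_Diff[OF f1])
  have fV: "x \<in> Vplus A \<Longrightarrow> f x \<in> Vplus A" for x using f1 unfolding good_def by auto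
  have fiV: "x \<in> Vplus A \<Longrightarrow> fi x \<in> Vplus A" for x using f1 unfolding good_def by auto
  have c1: "compose (Vplus A) fi' f = restrict (\<lambda>x. x) (Vplus A)"
    by (rule ext) (simp add: compose_def fi'_def fV f1(3))
  have c2: "compose (Vplus A) f fi' = restrict (\<lambda>x. x) (Vplus A)"
    by (rule ext) (simp add: compose_def fi'_def fiV f1(4))
  have i1: "lift \<Omega> A fi' \<circ> lift \<Omega> A f = id" using lift_hom[OF fi'D assms] c1 lift_id by simp
  have i2: "lift \<Omega> A f \<circ> lift \<Omega> A fi' = id" using lift_hom[OF assms fi'D] c2 lift_id by simp
  obtain fii where f2: "good fi'" "good fii" "\<And>x. x \<in> Vplus A \<Longrightarrow> fii (fi' x) = x" "\<And>x. x \<in> Vplus A \<Longrightarrow> fi' (fii x) = x"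
    using DiffD[OF fi'D] by metis
  have s1: "smooth (lift \<Omega> A f)" using smooth_lift_formula[OF f1(1,2)] lift_formula[OF f1] by simp
  have s2: "smooth (lift \<Omega> A fi')" using smooth_lift_formula[OF f2(1,2)] lift_formula[OF f2] by simp
  have "diffeo (lift \<Omega> A f)" unfolding diffeo_def using s1 s2 i1 i2 by blast
  then show ?thesis unfolding Aut_def using lift_pullback[OF f1] by blast
qed

end



lemma line_deriv:
  fixes H :: "'a::euclidean_space \<Rightarrow> 'b::euclidean_space"
  assumes "smooth H"
  shows "((\<lambda>r. H (p + r *\<^sub>R u) \<bullet> e) has_real_derivative (dir H u (p + r *\<^sub>R u) \<bullet> e)) (at r)"
proof -
  have h1: "((\<lambda>r. p + r *\<^sub>R u) has_derivative (\<lambda>t. t *\<^sub>R u)) (at r)" by (auto intro!: derivative_eq_intros)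
  have h2: "((\<lambda>r. H (p + r *\<^sub>R u)) has_derivative (\<lambda>t. frechet_derivative H (at (p + r *\<^sub>R u)) (t *\<^sub>R u))) (at r)"
    using diff_chain_at[OF h1 smooth_hasd[OF assms]] by (simp add: o_def)
  have lin: "linear (frechet_derivative H (at (p + r *\<^sub>R u)))" using smooth_hasd[OF assms] has_derivative_linear by blast
  have h3: "((\<lambda>r. H (p + r *\<^sub>R u) \<bullet> e) has_derivative (\<lambda>t. frechet_derivative H (at (p + r *\<^sub>R u)) (t *\<^sub>R u) \<bullet> e)) (at r)"
    using bounded_linear.has_derivative[OF bounded_linear_inner_left h2] .
  show ?thesis
    by (rule has_derivative_imp_has_field_derivative[OF h3]) (simp add: dir_def linear_scale[OF lin])
qed

lemma schwarz_aux:
  fixes G :: "'a::euclidean_space \<Rightarrow> 'b::euclidean_space"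
  assumes "smooth G" "s > 0"
  shows "\<exists>r q. 0 < r \<and> r < s \<and> 0 < q \<and> q < s \<and>
    G (z + s *\<^sub>R u + s *\<^sub>R v) \<bullet> e - G (z + s *\<^sub>R u) \<bullet> e - G (z + s *\<^sub>R v) \<bullet> e + G z \<bullet> e
      = s * s * (dir (dir G u) v (z + r *\<^sub>R u + q *\<^sub>R v) \<bullet> e)"
proof -
  define \<phi> where "\<phi> r = G ((z + s *\<^sub>R v) + r *\<^sub>R u) \<bullet> e - G (z + r *\<^sub>R u) \<bullet> e" for r
  have d\<phi>: "DERIV \<phi> r :> dir G u ((z + s *\<^sub>R v) + r *\<^sub>R u) \<bullet> e - dir G u (z + r *\<^sub>R u) \<bullet> e" for r
    unfolding \<phi>_def by (intro DERIV_diff line_deriv assms(1))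
  obtain r where r: "0 < r" "r < s" and
    er: "\<phi> s - \<phi> 0 = (s - 0) * (dir G u ((z + s *\<^sub>R v) + r *\<^sub>R u) \<bullet> e - dir G u (z + r *\<^sub>R u) \<bullet> e)"
    using MVT2[OF assms(2) d\<phi>] by blast
  define \<psi> where "\<psi> q = dir G u ((z + r *\<^sub>R u) + q *\<^sub>R v) \<bullet> e" for q
  have d\<psi>: "DERIV \<psi> q :> dir (dir G u) v ((z + r *\<^sub>R u) + q *\<^sub>R v) \<bullet> e" for q
    unfolding \<psi>_def by (intro line_deriv smooth_dir assms(1))
  obtain q where q: "0 < q" "q < s" and
    eq: "\<psi> s - \<psi> 0 = (s - 0) * (dir (dir G u) v ((z + r *\<^sub>R u) + q *\<^sub>R v) \<bullet> e)"
    using MVT2[OF assms(2) d\<psi>] by blast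
  have e1: "\<phi> s - \<phi> 0 = G (z + s *\<^sub>R u + s *\<^sub>R v) \<bullet> e - G (z + s *\<^sub>R u) \<bullet> e - G (z + s *\<^sub>R v) \<bullet> e + G z \<bullet> e"
    unfolding \<phi>_def by (simp add: algebra_simps)
  have e2: "\<psi> s - \<psi> 0 = dir G u ((z + s *\<^sub>R v) + r *\<^sub>R u) \<bullet> e - dir G u (z + r *\<^sub>R u) \<bullet> e"
    unfolding \<psi>_def by (simp add: algebra_simps)
  show ?thesis using r q er eq e1 e2 by (intro exI[of _ r] exI[of _ q]) (simp add: algebra_simps)
qed

lemma schwarz:
  fixes G :: "'a::euclidean_space \<Rightarrow> 'b::euclidean_space"
  assumes "smooth G"
  shows "dir (dir G u) v z = dir (dir G v) u z"
proof (rule euclidean_eqI)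
  fix e :: 'b assume "e \<in> Basis"
  define F1 where "F1 x = dir (dir G u) v x \<bullet> e" for x
  define F2 where "F2 x = dir (dir G v) u x \<bullet> e" for x
  have c1: "continuous (at z) F1" unfolding F1_def
    using smooth_cont[OF smooth_dir[OF smooth_dir[OF assms]]]
    by (intro continuous_intros) (simp add: continuous_on_eq_continuous_at)
  have c2: "continuous (at z) F2" unfolding F2_def
    using smooth_cont[OF smooth_dir[OF smooth_dir[OF assms]]]
    by (intro continuous_intros) (simp add: continuous_on_eq_continuous_at)
  have "F1 z = F2 z"
  proof (rule ccontr)
    assume ne: "F1 z \<noteq> F2 z"
    define \<epsilon> where "\<epsilon> = \<bar>F1 z - F2 z\<bar> / 3"
    have \<epsilon>: "\<epsilon> > 0" using ne by (simp add: \<epsilon>_def)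
    obtain d1 where d1: "d1 > 0" "\<And>x. dist x z < d1 \<Longrightarrow> dist (F1 x) (F1 z) < \<epsilon>"
      using c1[unfolded continuous_at_eps_delta] \<epsilon> by blast
    obtain d2 where d2: "d2 > 0" "\<And>x. dist x z < d2 \<Longrightarrow> dist (F2 x) (F2 z) < \<epsilon>"
      using c2[unfolded continuous_at_eps_delta] \<epsilon> by blast
    define s where "s = min d1 d2 / (2 * (norm u + norm v + 1))"
    have npos: "norm u + norm v + 1 > 0" by (simp add: add_nonneg_pos)
    then have s: "s > 0" using d1 d2 unfolding s_def by (intro divide_pos_pos) auto
    have close: "dist (z + r *\<^sub>R a + q *\<^sub>R b) z < min d1 d2"
      if "0 < r" "r < s" "0 < q" "q < s" "norm a + norm b \<le> norm u + norm v" for r q a b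
    proof -
      have "dist (z + r *\<^sub>R a + q *\<^sub>R b) z = norm (r *\<^sub>R a + q *\<^sub>R b)" by (simp add: dist_norm)
      also have "\<dots> \<le> r * norm a + q * norm b" using that norm_triangle_ineq[of "r *\<^sub>R a" "q *\<^sub>R b"] by simp
      also have "\<dots> \<le> s * norm a + s * norm b" using that by (intro add_mono mult_right_mono) auto
      also have "\<dots> \<le> s * (norm u + norm v)" using that s by (simp add: distrib_left[symmetric])
      also have "\<dots> < s * (2 * (norm u + norm v + 1))" using s npos by (intro mult_strict_left_mono) auto
      also have "\<dots> = min d1 d2" unfolding s_def using npos by simp
      finally show ?thesis .
    qed
    obtain r q where rq: "0 < r" "r < s" "0 < q" "q < s" and
      E1: "G (z + s *\<^sub>R u + s *\<^sub>R v) \<bullet> e - G (z + s *\<^sub>R u) \<bullet> e - G (z + s *\<^sub>R v) \<bullet> e + G z \<bullet> e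
      = s * s * F1 (z + r *\<^sub>R u + q *\<^sub>R v)"
      using schwarz_aux[OF assms s, of z u v e] unfolding F1_def by blast
    obtain r' q' where rq': "0 < r'" "r' < s" "0 < q'" "q' < s" and
      E2: "G (z + s *\<^sub>R v + s *\<^sub>R u) \<bullet> e - G (z + s *\<^sub>R v) \<bullet> e - G (z + s *\<^sub>R u) \<bullet> e + G z \<bullet> e
      = s * s * F2 (z + r' *\<^sub>R v + q' *\<^sub>R u)"
      using schwarz_aux[OF assms s, of z v u e] unfolding F2_def by blast
    have comm: "z + s *\<^sub>R v + s *\<^sub>R u = z + s *\<^sub>R u + s *\<^sub>R v" by (simp add: algebra_simps)
    have "s * s * F1 (z + r *\<^sub>R u + q *\<^sub>R v) = s * s * F2 (z + r' *\<^sub>R v + q' *\<^sub>R u)"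
      using E1 E2[unfolded comm] by linarith
    then have eqF: "F1 (z + r *\<^sub>R u + q *\<^sub>R v) = F2 (z + r' *\<^sub>R v + q' *\<^sub>R u)" using s by simp
    have "dist (F1 (z + r *\<^sub>R u + q *\<^sub>R v)) (F1 z) < \<epsilon>"
      using d1(2) close[OF rq, of u v] by simp
    moreover have "dist (F2 (z + r' *\<^sub>R v + q' *\<^sub>R u)) (F2 z) < \<epsilon>"
      using d2(2) close[OF rq', of v u] by simp
    ultimately have "\<bar>F1 z - F2 z\<bar> < 2 * \<epsilon>" using eqF by (simp add: dist_real_def)
    then show False using \<epsilon> by (simp add: \<epsilon>_def)
  qed
  then show "dir (dir G u) v z \<bullet> e = dir (dir G v) u z \<bullet> e" by (simp add: F1_def F2_def)
qed




context setting begin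

lemma skewM: "\<Omega> (M x) y - \<Omega> (M y) x = \<Omega> x y"
proof -
  have a: "\<Omega> (M x) y = \<Omega> (M x) (P y)" by (rule OmegaVm[OF M_in])
  have b: "\<Omega> (M y) x = \<Omega> (M y) (P x)" by (rule OmegaVm[OF M_in])
  have c: "\<Omega> (M y) (P x) = - \<Omega> (P x) (M y)" by (rule antisym)
  have d: "\<Omega> x y = \<Omega> (P x) (M y) + \<Omega> (M x) (P y)" by (rule Odecomp)
  show ?thesis using a b c d by linarith
qed

lemma sad_uniq:
  assumes "good f" "good h" "\<And>x. x \<in> Vplus A \<Longrightarrow> h (f x) = x" "\<And>x. x \<in> Vplus A \<Longrightarrow> f (h x) = x"
    "y \<in> Vplus A" "w \<in> Vminus A" "sad (Bd f y) w = x"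
  shows "w = sad (Bd h (f y)) x"
proof -
  have linf: "linear (Bd f y)" and linh: "linear (Bd h (f y))" using assms(1,2) linB unfolding good_def by auto
  have fy: "f y \<in> Vplus A" using assms(1,5) unfolding good_def by auto
  have inv2: "Bd f y (Bd h (f y) v) = P v" for v
    using B_inv[OF assms(2,1) assms(4) fy, of v] assms(3)[OF assms(5)] by simp
  have "\<Omega> (w - sad (Bd h (f y)) x) u = 0" for u
  proof -
    have "\<Omega> w u = \<Omega> w (P u)" using OmegaVm assms(6) by blast
    also have "\<dots> = \<Omega> w (Bd f y (Bd h (f y) u))" by (simp add: inv2)
    also have "\<dots> = \<Omega> x (Bd h (f y) u)" using sad_prop[OF linf, of w "Bd h (f y) u"] assms(7) by simp
    also have "\<dots> = \<Omega> (sad (Bd h (f y)) x) u" using sad_prop[OF linh] by simp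
    finally show ?thesis by (simp add: Oadd)
  qed
  then show ?thesis using nondeg by (metis eq_iff_diff_eq_0)
qed

lemma Aut_surj:
  assumes GA: "G \<in> Aut \<Omega> A"
  shows "G \<in> lift \<Omega> A ` Diff_plus A"
proof -
  from GA have dG: "diffeo G" and pb: "pullback_theta \<Omega> A G = theta \<Omega> A" unfolding Aut_def by auto
  from dG obtain Gi where sG: "smooth G" and sGi: "smooth Gi" and c1: "Gi \<circ> G = id" and c2: "G \<circ> Gi = id"
    unfolding diffeo_def by blast
  have GiG: "Gi (G x) = x" for x using c1 by (metis comp_apply id_apply)
  have GGi: "G (Gi x) = x" for x using c2 by (metis comp_apply id_apply)
  define D where "D z = frechet_derivative G (at z)" for z
  have hG: "(G has_derivative D z) (at z)" for z unfolding D_def by (rule smooth_hasd[OF sG])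
  have linD: "linear (D z)" for z using hG has_derivative_linear by blast
  have cond: "\<Omega> (M (G z)) (D z v) = \<Omega> (M z) v" for z v
  proof -
    have "pullback_theta \<Omega> A G z v = theta \<Omega> A z v" using pb by simp
    then show ?thesis unfolding pullback_theta_def theta_eq two_M D_def by (simp add: Oadd)
  qed
  have surjD: "\<exists>v. D z v = w" for z w
  proof -
    have h1: "((\<lambda>y. G (Gi y)) has_derivative (\<lambda>h. D (Gi y) (frechet_derivative Gi (at y) h))) (at y)" for y
      using diff_chain_at[OF smooth_hasd[OF sGi] hG] by (simp add: o_def)
    have "((\<lambda>y. G (Gi y)) has_derivative (\<lambda>h. h)) (at y)" for y
      unfolding GGi by (rule has_derivative_ident)
    then have "(\<lambda>h. D (Gi y) (frechet_derivative Gi (at y) h)) = (\<lambda>h. h)" for y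
      using h1 has_derivative_unique by blast
    from fun_cong[OF this[of "G z"]] show ?thesis unfolding GiG by blast
  qed
  have nondegD: "x = 0" if "\<And>v. \<Omega> x (D z v) = 0" for x z
    using that surjD nondeg by metis
  have step3: "M (G z) = 0" if "z \<in> Vplus A" for z
    using cond[of z] that by (intro nondegD[of _ z]) (simp add: M_Vp Oadd)
  have E: "\<Omega> (M (G z)) (dir (dir G v) u z) + \<Omega> (M (D z u)) (D z v) = \<Omega> (M u) v" for z u v
  proof -
    have dv: "dir G v = (\<lambda>z. D z v)" unfolding dir_def D_def ..
    have h1: "((\<lambda>z. \<Omega> (M (G z)) (dir G v z)) has_derivative
        (\<lambda>u. \<Omega> (M (G z)) (frechet_derivative (dir G v) (at z) u) + \<Omega> (M (D z u)) (dir G v z))) (at z)"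
      by (rule bounded_bilinear.FDERIV[OF bb bounded_linear.has_derivative[OF blM hG] smooth_hasd[OF smooth_dir[OF sG]]])
    have h2: "((\<lambda>z. \<Omega> (M z) v) has_derivative (\<lambda>u. \<Omega> (M z) 0 + \<Omega> (M u) v)) (at z)"
      by (rule bounded_bilinear.FDERIV[OF bb bounded_linear_imp_has_derivative[OF blM] has_derivative_const])
    have "(\<lambda>z. \<Omega> (M (G z)) (dir G v z)) = (\<lambda>z. \<Omega> (M z) v)" unfolding dv using cond by simp
    then have "(\<lambda>u. \<Omega> (M (G z)) (frechet_derivative (dir G v) (at z) u) + \<Omega> (M (D z u)) (dir G v z))
        = (\<lambda>u. \<Omega> (M z) 0 + \<Omega> (M u) v)" using h1 h2 has_derivative_unique by metis
    from fun_cong[OF this, of u] have "\<Omega> (M (G z)) (frechet_derivative (dir G v) (at z) u) + \<Omega> (M (D z u)) (dir G v z) = \<Omega> (M u) v"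
      by (simp add: Oadd)
    then show ?thesis unfolding dir_def[of "dir G v"] by (simp add: dv)
  qed
  have sympl: "\<Omega> (D z u) (D z v) = \<Omega> u v" for z u v
  proof -
    have sw: "dir (dir G v) u z = dir (dir G u) v z" by (rule schwarz[OF sG])
    have "\<Omega> (M (D z u)) (D z v) - \<Omega> (M (D z v)) (D z u) = \<Omega> (M u) v - \<Omega> (M v) u"
      using E[of z u v, unfolded sw] E[of z v u, unfolded sw] by linarith
    then show ?thesis by (simp add: skewM)
  qed
  have step6: "D z (M z) = M (G z)" for z
  proof -
    have "\<Omega> (D z (M z) - M (G z)) (D z v) = 0" for v using sympl[of z "M z" v] cond[of z v] by (simp add: Oadd)
    then have "D z (M z) - M (G z) = 0" by (rule nondegD)
    then show ?thesis by simp
  qed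
  have step7: "P (G z) = P (G (P z))" for z
  proof -
    define \<psi> where "\<psi> t = P (G (P z + t *\<^sub>R M z))" for t :: real
    have hl: "((\<lambda>t. P z + t *\<^sub>R M z) has_derivative (\<lambda>s. s *\<^sub>R M z)) (at t)" for t
      by (auto intro!: derivative_eq_intros)
    have hpsi: "(\<psi> has_derivative (\<lambda>s. s *\<^sub>R P (D (P z + t *\<^sub>R M z) (M z)))) (at t)" for t
    proof -
      have "((\<lambda>t. G (P z + t *\<^sub>R M z)) has_derivative (\<lambda>s. D (P z + t *\<^sub>R M z) (s *\<^sub>R M z))) (at t)"
        using diff_chain_at[OF hl hG] by (simp add: o_def)
      from bounded_linear.has_derivative[OF blP this]
      show ?thesis unfolding \<psi>_def using linD linP by (simp add: linear_scale)
    qed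
    have zero: "P (D (P z + t *\<^sub>R M z) (M z)) = 0" if "t \<noteq> 0" for t
    proof -
      define w where "w = P z + t *\<^sub>R M z"
      have Mw: "M w = t *\<^sub>R M z" unfolding w_def using linM by (simp add: Madd linear_scale)
      have "D w (M z) = (1/t) *\<^sub>R D w (M w)" using that linD[of w] by (simp add: Mw linear_scale)
      also have "\<dots> = (1/t) *\<^sub>R M (G w)" by (simp add: step6)
      finally have "P (D w (M z)) = (1/t) *\<^sub>R P (M (G w))" using linP by (simp add: linear_scale)
      then show ?thesis unfolding w_def by simp
    qed
    have cont: "continuous_on {0..1} \<psi>"
      using hpsi by (intro differentiable_imp_continuous_on) (auto simp: differentiable_on_def differentiable_def intro: has_derivative_at_withinI)
    have "\<psi> 1 = \<psi> 0"
    proof (rule has_derivative_zero_unique_strong_interval[of "{0}" 0 1 \<psi>])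
      fix t assume "t \<in> {0..1::real} - {0}"
      then have "(\<psi> has_derivative (\<lambda>h. 0)) (at t)" using hpsi[of t] zero[of t] by simp
      then show "(\<psi> has_derivative (\<lambda>h. 0)) (at t within {0..1})" by (rule has_derivative_at_withinI)
    qed (auto simp: cont)
    then show ?thesis unfolding \<psi>_def by (simp add: PM)
  qed
  have GPV: "G (P z) \<in> Vplus A" for z using step3[OF P_in] by (simp add: inVp')
  have step8: "P (G z) = G (P z)" for z using step7 P_Vp[OF GPV] by simp
  define f where "f = restrict G (Vplus A)"
  have fP: "(\<lambda>z. f (P z)) = (\<lambda>z. G (P z))" unfolding f_def by simp
  have sfP: "smooth (\<lambda>z. G (P z))" by (rule smooth_comp[OF sG smooth_linear[OF linP]])
  have GV: "G x \<in> Vplus A" if "x \<in> Vplus A" for x using GPV[of x] P_Vp[OF that] by simp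
  have gf: "good f" unfolding good_def fP using sfP GV by (auto simp: f_def)
  have Bdf: "Bd f = Bd G" unfolding Bd_def fP ..
  have step9: "sad (Bd G (P z)) (M (G z)) = M z" for z
  proof -
    have hB: "((\<lambda>z. G (P z)) has_derivative Bd G z) (at z)" by (rule hasB[OF sfP])
    have "((\<lambda>z. P (G z)) has_derivative (\<lambda>v. P (D z v))) (at z)" by (rule bounded_linear.has_derivative[OF blP hG])
    then have "((\<lambda>z. G (P z)) has_derivative (\<lambda>v. P (D z v))) (at z)" unfolding step8 .
    then have PD: "P (D z v) = Bd G z v" for v using hB has_derivative_unique by metis
    have linB': "linear (Bd G (P z))" by (rule linB[OF sfP])
    have "\<Omega> (sad (Bd G (P z)) (M (G z)) - M z) v = 0" for v
    proof -
      have "\<Omega> (sad (Bd G (P z)) (M (G z))) v = \<Omega> (M (G z)) (Bd G (P z) v)" by (rule sad_prop[OF linB'])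
      also have "Bd G (P z) v = Bd G z v"
        using B_P[OF sfP, of "P z" v] B_P[OF sfP, of z v] by simp
      also have "\<dots> = P (D z v)" by (simp add: PD)
      also have "\<Omega> (M (G z)) (P (D z v)) = \<Omega> (M (G z)) (D z v)" using OmegaVm[OF M_in, of "G z" "D z v"] by (rule sym)
      also have "\<dots> = \<Omega> (M z) v" by (rule cond)
      finally show ?thesis by (simp add: Oadd)
    qed
    then have "sad (Bd G (P z)) (M (G z)) - M z = 0" by (rule nondeg)
    then show ?thesis by simp
  qed
  have GiV: "Gi y \<in> Vplus A" if "y \<in> Vplus A" for y
  proof -
    have "M (Gi y) = sad (Bd G (P (Gi y))) (M (G (Gi y)))" by (rule step9[symmetric])
    also have "\<dots> = 0" using that by (simp add: GGi M_Vp sad_zero)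
    finally show ?thesis by (simp add: inVp')
  qed
  define fi where "fi = restrict Gi (Vplus A)"
  have fiP: "(\<lambda>z. fi (P z)) = (\<lambda>z. Gi (P z))" unfolding fi_def by simp
  have sfiP: "smooth (\<lambda>z. Gi (P z))" by (rule smooth_comp[OF sGi smooth_linear[OF linP]])
  have gfi: "good fi" unfolding good_def fiP using sfiP GiV by (auto simp: fi_def)
  have inv1: "fi (f x) = x" if "x \<in> Vplus A" for x
    using that GPV[of x] by (simp add: f_def fi_def P_Vp GiG)
  have inv2: "f (fi x) = x" if "x \<in> Vplus A" for x
    using that GiV by (simp add: f_def fi_def GGi)
  have fD: "f \<in> Diff_plus A"
    unfolding Diff_plus_def Pplus_eq o_def
    using gf gfi inv1 inv2 unfolding good_def by (auto simp: f_def intro!: exI[of _ fi])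
  have "lift \<Omega> A f = G"
  proof
    fix z
    have "lift \<Omega> A f z = f (P z) + sad (Bd fi (f (P z))) (M z)" using lift_formula[OF gf gfi inv1 inv2] by simp
    also have "sad (Bd fi (f (P z))) (M z) = M (G z)"
      by (rule sad_uniq[OF gf gfi inv1 inv2 P_in M_in, symmetric]) (simp_all add: Bdf step9)
    also have "f (P z) = P (G z)" by (simp add: f_def step8)
    finally show "lift \<Omega> A f z = G z" by (simp add: PM)
  qed
  then show ?thesis using fD by blast
qed

end


theorem theorem4:
  fixes \<Omega> :: "'a::euclidean_space \<Rightarrow> 'a \<Rightarrow> real" and A :: "'a \<Rightarrow> 'a"
  assumes "symplectic_form \<Omega>"
    and "linear A"
    and "\<forall>x y. \<Omega> (A x) y + \<Omega> x (A y) = 0"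
    and "A \<circ> A = id"
  shows "bij_betw (lift \<Omega> A) (Diff_plus A) (Aut \<Omega> A)
    \<and> (\<forall>f\<in>Diff_plus A. \<forall>h\<in>Diff_plus A.
          lift \<Omega> A (compose (Vplus A) f h) = lift \<Omega> A f \<circ> lift \<Omega> A h)"
proof -
  interpret setting \<Omega> A using assms by (rule setting.intro)
  have "lift \<Omega> A ` Diff_plus A = Aut \<Omega> A" using lift_Aut Aut_surj by blast
  then have "bij_betw (lift \<Omega> A) (Diff_plus A) (Aut \<Omega> A)" using lift_inj unfolding bij_betw_def by blast
  then show ?thesis using lift_hom by blast
qed

end
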